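(* Fix $\epsilon>0$. For all $f\in\mathcal{F}_k$ and all $u\in\mathbb{R}^k$, $\hat\Psi(u)\subseteq\Psi^f(u)$.
   Context: $[k]=\{1,\dots,k\}$, $\mathcal{Y}=\{-1,1\}^k$, $\mathcal{V}=\{-1,0,1\}^k$, $\Delta_\mathcal{Y}$ the distributions on $\mathcal{Y}$. $u\odot u'$ entrywise product, $\mathbbm{1}$ all-ones, $(x)_+$ entrywise positive part; $\boxed{u}=\mathrm{sign}(u)\odot\min(|u|,\mathbbm{1})$ is the entrywise clipping of $u$ to $[-1,1]^k$. For $A\subseteq\mathbb{R}^k$, $d_\infty(A,u)=\inf_{a\in A}\|a-u\|_\infty$. For a permutation $\pi$ of $[k]$ and $i\in\{0,\dots,k\}$, $\mathbbm{1}_{\pi,i}$ is the indicator vector of $\{\pi_1,\dots,\pi_i\}$; $V_{\pi,y}=\{\mathbbm{1}_{\pi,i}\odot y: i=0,\dots,k\}$; $\mathcal{V}^{\text{face}}=\bigcup_{\pi,y\in\mathcal{Y}}2^{V_{\pi,y}}$. $\mathcal{F}_k$: submodular, increasing, normalized set functions $f:2^{[k]}\to\mathbb{R}$. Lovász extension $F(x)=\max_\pi\sum_{i}x_{\pi_i}(f(\{\pi_1,..,\pi_i\})-f(\{\pi_1,..,\pi_{i-1}\}))$; Lovász hinge $L^f(u,y)=F((\mathbbm{1}-u\odot y)_+)$; $L^f(u;p)=\sum_yp_yL^f(u,y)$. Define $\hat\Psi(u)=\bigcap\{V\in\mathcal{V}^{\text{face}}: d_\infty(\mathrm{conv}\,V,\boxed{u})<\epsilon\}$.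 Let $\mathcal{U}^f=\{\arg\min_{u'\in\mathbb{R}^k}L^f(u';p): p\in\Delta_\mathcal{Y}\}$ and $\Psi^f(u)=\mathcal{V}\cap\bigcap\{U\in\mathcal{U}^f: d_\infty(U,u)<\epsilon\}$ (an empty intersection of subsets of $\mathbb{R}^k$ is $\mathbb{R}^k$). *)

theory Defs
  imports "HOL-Analysis.Analysis"
begin

text \<open>The index set [k] is modelled by a finite type 'k (k = CARD('k)); vectors in R^k are real^'k.\<close>

definition Ycube :: "(real^'k) set" where
  "Ycube = {y. \<forall>i. y$i = -1 \<or> y$i = 1}"

definition Vcube :: "(real^'k) set" where
  "Vcube = {v. \<forall>i. v$i = -1 \<or> v$i = 0 \<or> v$i = 1}"

definition DeltaY :: "((real^'k) \<Rightarrow> real) set" where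
  "DeltaY = {p. (\<forall>y. 0 \<le> p y) \<and> (\<forall>y. y \<notin> Ycube \<longrightarrow> p y = 0) \<and> sum p Ycube = 1}"

definition emult :: "real^'k \<Rightarrow> real^'k \<Rightarrow> real^'k" where
  "emult a b = (\<chi> i. a$i * b$i)"

definition clip :: "real^'k \<Rightarrow> real^'k" where
  "clip u = (\<chi> i. sgn (u$i) * min \<bar>u$i\<bar> 1)"

text \<open>d_infinity(A,u) = inf over a in A of the sup-norm distance, in the extended reals
  (so that the infimum over the empty set is +infinity).\<close>
definition dinf :: "(real^'k) set \<Rightarrow> real^'k \<Rightarrow> ereal" where
  "dinf A u = (INF a\<in>A. ereal (infnorm (a - u)))"

text \<open>Permutations of [k], as enumerations (lists) of all indices; pi_i = pi ! (i-1).\<close>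
definition perms :: "('k::finite) list set" where
  "perms = {\<pi>. distinct \<pi> \<and> set \<pi> = UNIV}"

definition ind :: "'k list \<Rightarrow> nat \<Rightarrow> real^'k" where
  "ind \<pi> i = (\<chi> j. if j \<in> set (take i \<pi>) then 1 else 0)"

definition Vpy :: "('k::finite) list \<Rightarrow> real^'k \<Rightarrow> (real^'k) set" where
  "Vpy \<pi> y = {emult (ind \<pi> i) y | i. i \<le> CARD('k)}"

definition Vface :: "((real^('k::finite)) set) set" where
  "Vface = (\<Union>{Pow (Vpy \<pi> y) | \<pi> y. \<pi> \<in> perms \<and> y \<in> Ycube})"

definition submodular_fun :: "(('k::finite) set \<Rightarrow> real) \<Rightarrow> bool" where
  "submodular_fun f \<longleftrightarrow>
     (\<forall>A B. f (A \<union> B) + f (A \<inter> B) \<le> f A + f B) \<and>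
     (\<forall>A B. A \<subseteq> B \<longrightarrow> f A \<le> f B) \<and>
     f {} = 0"

definition Fk :: "(('k::finite) set \<Rightarrow> real) set" where
  "Fk = {f. submodular_fun f}"

definition lovasz :: "(('k::finite) set \<Rightarrow> real) \<Rightarrow> real^'k \<Rightarrow> real" where
  "lovasz f x = Max ((\<lambda>\<pi>. \<Sum>i<length \<pi>. x$(\<pi>!i) *
        (f (set (take (Suc i) \<pi>)) - f (set (take i \<pi>)))) ` perms)"

definition lovasz_hinge :: "(('k::finite) set \<Rightarrow> real) \<Rightarrow> real^'k \<Rightarrow> real^'k \<Rightarrow> real" where
  "lovasz_hinge f u y = lovasz f (\<chi> i. max 0 (1 - u$i * y$i))"

definition exp_hinge :: "(('k::finite) set \<Rightarrow> real) \<Rightarrow> real^'k \<Rightarrow> (real^'k \<Rightarrow> real) \<Rightarrow> real" where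
  "exp_hinge f u p = (\<Sum>y\<in>Ycube. p y * lovasz_hinge f u y)"

definition argmin_set :: "(('k::finite) set \<Rightarrow> real) \<Rightarrow> (real^'k \<Rightarrow> real) \<Rightarrow> (real^'k) set" where
  "argmin_set f p = {u. \<forall>u'. exp_hinge f u p \<le> exp_hinge f u' p}"

definition Uf :: "(('k::finite) set \<Rightarrow> real) \<Rightarrow> ((real^'k) set) set" where
  "Uf f = {argmin_set f p | p. p \<in> DeltaY}"

definition PsiHat :: "real \<Rightarrow> real^('k::finite) \<Rightarrow> (real^'k) set" where
  "PsiHat \<epsilon> u = \<Inter>{V \<in> Vface. dinf (convex hull V) (clip u) < ereal \<epsilon>}"

definition Psif :: "(('k::finite) set \<Rightarrow> real) \<Rightarrow> real \<Rightarrow> real^'k \<Rightarrow> (real^'k) set" where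
  "Psif f \<epsilon> u = Vcube \<inter> \<Inter>{U \<in> Uf f. dinf U u < ereal \<epsilon>}"

end

theory Submission
  imports Defs
begin

definition lin :: "(('k::finite) set \<Rightarrow> real) \<Rightarrow> 'k list \<Rightarrow> real^'k \<Rightarrow> real" where
  "lin f \<tau> x = (\<Sum>i<length \<tau>. x$(\<tau>!i) * (f (set (take (Suc i) \<tau>)) - f (set (take i \<tau>))))"

definition indv :: "('k::finite) set \<Rightarrow> real^'k" where
  "indv A = (\<chi> j. if j \<in> A then 1 else 0)"

lemma lovasz_lin: "lovasz f x = Max ((\<lambda>\<tau>. lin f \<tau> x) ` perms)"
  unfolding lovasz_def lin_def by simp

lemma finite_perms: "finite (perms :: ('k::finite) list set)"
proof -
  have "perms \<subseteq> {xs. set xs \<subseteq> (UNIV::'k set) \<and> distinct xs}" unfolding perms_def by auto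
  thus ?thesis using finite_subset_distinct[of "UNIV::'k set"] finite_subset by auto
qed

lemma perms_ne: "(perms :: ('k::finite) list set) \<noteq> {}"
  using finite_distinct_list[of "UNIV::'k set"] unfolding perms_def by auto

lemma lin_le_lovasz: "\<tau> \<in> perms \<Longrightarrow> lin f \<tau> x \<le> lovasz f x"
  unfolding lovasz_lin using finite_perms by (intro Max_ge) auto

lemma lovasz_le: "(\<And>\<tau>. \<tau> \<in> perms \<Longrightarrow> lin f \<tau> x \<le> M) \<Longrightarrow> lovasz f x \<le> M"
  unfolding lovasz_lin using finite_perms perms_ne by (subst Max_le_iff) auto

lemma lin_add: "lin f \<tau> (x + y) = lin f \<tau> x + lin f \<tau> y"
  unfolding lin_def sum.distrib[symmetric] by (rule sum.cong) (auto simp: algebra_simps)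

lemma lin_scale: "lin f \<tau> (a *\<^sub>R x) = a * lin f \<tau> x"
  unfolding lin_def by (simp add: sum_distrib_left algebra_simps)

lemma lin_sum: "finite I \<Longrightarrow> lin f \<tau> (\<Sum>i\<in>I. a i *\<^sub>R x i) = (\<Sum>i\<in>I. a i * lin f \<tau> (x i))"
  by (induction I rule: finite_induct) (auto simp: lin_add lin_scale, simp add: lin_def)

lemma lin_mono:
  assumes "submodular_fun f" "\<And>j. x$j \<le> x'$j"
  shows "lin f \<tau> x \<le> lin f \<tau> x'"
  unfolding lin_def
proof (rule sum_mono)
  fix i
  have "set (take i \<tau>) \<subseteq> set (take (Suc i) \<tau>)" by (metis set_take_subset_set_take le_SucI order_refl)
  hence "f (set (take i \<tau>)) \<le> f (set (take (Suc i) \<tau>))" using assms(1) unfolding submodular_fun_def by blast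
  thus "x $ (\<tau> ! i) * (f (set (take (Suc i) \<tau>)) - f (set (take i \<tau>)))
         \<le> x' $ (\<tau> ! i) * (f (set (take (Suc i) \<tau>)) - f (set (take i \<tau>)))"
    using assms(2) by (intro mult_right_mono) auto
qed

lemma lovasz_mono:
  assumes "submodular_fun f" "\<And>j. x$j \<le> x'$j"
  shows "lovasz f x \<le> lovasz f x'"
  by (rule lovasz_le) (meson assms lin_mono lin_le_lovasz order_trans)

lemma h_bound_aux:
  assumes "submodular_fun f" "m \<le> length \<tau>"
  shows "(\<Sum>i<m. (if \<tau>!i \<in> A then 1 else 0) * (f (set (take (Suc i) \<tau>)) - f (set (take i \<tau>))))
         \<le> f (A \<inter> set (take m \<tau>))"
  using assms(2)
proof (induction m)
  case 0
  then show ?case using assms(1) unfolding submodular_fun_def by simp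
next
  case (Suc m)
  have tk: "take (Suc m) \<tau> = take m \<tau> @ [\<tau>!m]" using Suc.prems by (simp add: take_Suc_conv_app_nth)
  show ?case
  proof (cases "\<tau>!m \<in> A")
    case True
    have sm: "f ((A \<inter> set (take (Suc m) \<tau>)) \<union> set (take m \<tau>)) + f ((A \<inter> set (take (Suc m) \<tau>)) \<inter> set (take m \<tau>))
       \<le> f (A \<inter> set (take (Suc m) \<tau>)) + f (set (take m \<tau>))"
      using assms(1) unfolding submodular_fun_def by blast
    have e1: "(A \<inter> set (take (Suc m) \<tau>)) \<union> set (take m \<tau>) = set (take (Suc m) \<tau>)" using True tk by auto
    have e2: "(A \<inter> set (take (Suc m) \<tau>)) \<inter> set (take m \<tau>) = A \<inter> set (take m \<tau>)" using tk by auto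
    show ?thesis using Suc.IH Suc.prems sm e1 e2 True by simp
  next
    case False
    have "A \<inter> set (take (Suc m) \<tau>) = A \<inter> set (take m \<tau>)" using False tk by auto
    then show ?thesis using Suc.IH Suc.prems False by simp
  qed
qed

lemma h_bound:
  assumes "submodular_fun f" "\<tau> \<in> perms"
  shows "lin f \<tau> (indv A) \<le> f A"
proof -
  have "lin f \<tau> (indv A) = (\<Sum>i<length \<tau>. (if \<tau>!i \<in> A then 1 else 0) * (f (set (take (Suc i) \<tau>)) - f (set (take i \<tau>))))"
    unfolding lin_def indv_def by simp
  also have "\<dots> \<le> f (A \<inter> set (take (length \<tau>) \<tau>))" by (rule h_bound_aux[OF assms(1)]) simp
  also have "\<dots> = f A" using assms(2) unfolding perms_def by simp
  finally show ?thesis .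
qed

lemma h_prefix:
  assumes "submodular_fun f" "distinct \<sigma>"
  shows "lin f \<sigma> (indv (set (take l \<sigma>))) = f (set (take l \<sigma>))"
proof -
  have mem: "\<sigma>!i \<in> set (take l \<sigma>) \<longleftrightarrow> i < l" if "i < length \<sigma>" for i
    using that assms(2) by (auto simp: in_set_conv_nth nth_eq_iff_index_eq)
  have "lin f \<sigma> (indv (set (take l \<sigma>))) = (\<Sum>i<length \<sigma>. (if i < l then 1 else 0) * (f (set (take (Suc i) \<sigma>)) - f (set (take i \<sigma>))))"
    unfolding lin_def indv_def using mem by (intro sum.cong) auto
  also have "\<dots> = (\<Sum>i<min l (length \<sigma>). f (set (take (Suc i) \<sigma>)) - f (set (take i \<sigma>)))"
    by (rule sum.mono_neutral_cong_right) auto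
  also have "\<dots> = f (set (take (min l (length \<sigma>)) \<sigma>)) - f (set (take 0 \<sigma>))"
    by (rule sum_lessThan_telescope)
  also have "\<dots> = f (set (take l \<sigma>))" using assms(1) unfolding submodular_fun_def
    by (simp add: min_def)
  finally show ?thesis .
qed

lemma clip_comp: "clip u $ j = sgn (u$j) * min \<bar>u$j\<bar> 1"
  unfolding clip_def by simp

lemma clip_abs: "\<bar>clip u $ j\<bar> \<le> 1"
  unfolding clip_comp by (auto simp: sgn_if abs_mult)

lemma clip_hinge:
  assumes "y \<in> Ycube"
  shows "max 0 (1 - clip u $ j * y$j) \<le> max 0 (1 - u$j * y$j)"
proof -
  have "y$j = -1 \<or> y$j = 1" using assms unfolding Ycube_def by auto
  thus ?thesis unfolding clip_comp by (auto simp: sgn_if min_def)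
qed

lemma clip_lip1: "\<bar>clip a $ j - clip b $ j\<bar> \<le> \<bar>a$j - b$j\<bar>"
  unfolding clip_comp by (auto simp: sgn_if min_def)

lemma clip_lip: "infnorm (clip a - clip b) \<le> infnorm (a - b)"
proof -
  have "\<bar>(clip a - clip b) $ j\<bar> \<le> infnorm (a - b)" for j
    using clip_lip1[of a j b] component_le_infnorm_cart[of "a - b" j] by simp
  thus ?thesis unfolding infnorm_cart[of "clip a - clip b"] by (intro cSup_least) auto
qed

lemma sigma_exists:
  assumes "\<pi> \<in> perms"
  shows "\<exists>\<sigma>\<in>perms. \<forall>i. (\<exists>l. set (take l \<sigma>) = set (take i \<pi>) \<inter> N) \<and>
             (\<exists>l. set (take l \<sigma>) = - (set (take i \<pi>) - N))"
proof -
  let ?P = "\<lambda>j. j \<in> N" and ?Q = "\<lambda>j. j \<notin> N"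
  define \<sigma> where "\<sigma> = filter ?P \<pi> @ rev (filter ?Q \<pi>)"
  have dp: "distinct \<pi>" and sp: "set \<pi> = UNIV" using assms unfolding perms_def by auto
  have "\<sigma> \<in> perms" unfolding perms_def \<sigma>_def using dp sp by auto
  moreover have "\<forall>i. (\<exists>l. set (take l \<sigma>) = set (take i \<pi>) \<inter> N) \<and>
             (\<exists>l. set (take l \<sigma>) = - (set (take i \<pi>) - N))"
  proof
    fix i
    define t d where "t = take i \<pi>" and "d = drop i \<pi>"
    have td: "\<pi> = t @ d" unfolding t_def d_def by simp
    have disj: "set t \<inter> set d = {}" and un: "set t \<union> set d = UNIV"
      using dp sp td by (metis distinct_append) (metis sp td set_append)
    have s1: "\<sigma> = filter ?P t @ filter ?P d @ rev (filter ?Q d) @ rev (filter ?Q t)"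
      unfolding \<sigma>_def td by simp
    have "set (take (length (filter ?P t)) \<sigma>) = set t \<inter> N"
      unfolding s1 by auto
    moreover have "set (take (length (filter ?P t) + length (filter ?P d) + length (filter ?Q d)) \<sigma>)
        = - (set t - N)"
    proof -
      have "take (length (filter ?P t) + length (filter ?P d) + length (filter ?Q d)) \<sigma>
          = filter ?P t @ filter ?P d @ rev (filter ?Q d)"
        unfolding s1 by simp
      thus ?thesis using disj un by auto
    qed
    ultimately show "(\<exists>l. set (take l \<sigma>) = set (take i \<pi>) \<inter> N) \<and>
             (\<exists>l. set (take l \<sigma>) = - (set (take i \<pi>) - N))" unfolding t_def by blast
  qed
  ultimately show ?thesis by blast
qed

lemma decomp:
  fixes c :: "real^'k::finite"
  assumes c1: "\<And>j. \<bar>c$j\<bar> \<le> 1"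
  shows "\<exists>\<pi>\<in>perms. \<exists>s\<in>Ycube. \<exists>lam. (\<forall>i. 0 \<le> lam i) \<and> (\<Sum>i\<le>CARD('k). lam i) = 1 \<and>
           c = (\<Sum>i\<le>CARD('k). lam i *\<^sub>R emult (ind \<pi> i) s)"
proof -
  let ?n = "CARD('k)"
  obtain xs :: "'k list" where xs: "set xs = UNIV" "distinct xs" using finite_distinct_list[of "UNIV::'k set"] by auto
  define \<pi> where "\<pi> = sort_key (\<lambda>j. - \<bar>c$j\<bar>) xs"
  have pp: "\<pi> \<in> perms" unfolding perms_def \<pi>_def using xs by simp
  have dp: "distinct \<pi>" and sp: "set \<pi> = UNIV" using pp unfolding perms_def by auto
  have lp: "length \<pi> = ?n" using distinct_card[OF dp] sp by simp
  have srt: "sorted (map (\<lambda>j. - \<bar>c$j\<bar>) \<pi>)" unfolding \<pi>_def by simp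
  define s :: "real^'k" where "s = (\<chi> j. if c$j < 0 then -1 else 1)"
  have sY: "s \<in> Ycube" unfolding Ycube_def s_def by auto
  define a where "a p = (if p < ?n then \<bar>c$(\<pi>!p)\<bar> else 0)" for p
  have amono: "a q \<le> a p" if "p \<le> q" for p q
  proof (cases "q < ?n")
    case True
    have "(map (\<lambda>j. - \<bar>c$j\<bar>) \<pi>)!p \<le> (map (\<lambda>j. - \<bar>c$j\<bar>) \<pi>)!q"
      using sorted_nth_mono[OF srt that] True lp by simp
    thus ?thesis using True that lp unfolding a_def by simp
  qed (auto simp: a_def)
  have a1: "a p \<le> 1" for p unfolding a_def using c1 by auto
  have a0: "a p \<ge> 0" for p unfolding a_def by auto
  define lam where "lam i = (if i = 0 then 1 - a 0 else a (i - 1) - a i)" for i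
  have lnn: "\<forall>i. 0 \<le> lam i" unfolding lam_def using a1 amono by auto
  have lsum: "(\<Sum>i\<le>?n. lam i) = 1"
  proof -
    have "(\<Sum>i\<le>?n. lam i) = lam 0 + (\<Sum>i<?n. lam (Suc i))" by (rule sum.atMost_shift)
    also have "(\<Sum>i<?n. lam (Suc i)) = (\<Sum>i<?n. a i - a (Suc i))" unfolding lam_def by simp
    also have "\<dots> = a 0 - a ?n" by (rule sum_lessThan_telescope')
    finally show ?thesis unfolding lam_def a_def by simp
  qed
  have comp: "c$j = (\<Sum>i\<le>?n. lam i *\<^sub>R emult (ind \<pi> i) s)$j" for j
  proof -
    obtain p where p: "p < ?n" "\<pi>!p = j" using sp lp by (metis UNIV_I in_set_conv_nth)
    have mem: "j \<in> set (take i \<pi>) \<longleftrightarrow> p < i" for i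
      using p dp lp by (auto simp: in_set_conv_nth nth_eq_iff_index_eq)
    have "(\<Sum>i\<le>?n. lam i *\<^sub>R emult (ind \<pi> i) s)$j = (\<Sum>i\<le>?n. lam i * (if p < i then 1 else 0)) * s$j"
      unfolding emult_def ind_def by (simp add: mem sum_distrib_right mult.assoc)
    also have "(\<Sum>i\<le>?n. lam i * (if p < i then 1 else 0)) = (\<Sum>i<?n. lam (Suc i) * (if p < Suc i then 1 else 0))"
      by (subst sum.atMost_shift) simp
    also have "\<dots> = (\<Sum>i\<in>{p..<?n}. a i - a (Suc i))"
      by (rule sum.mono_neutral_cong_right) (auto simp: lam_def)
    also have "\<dots> = - (\<Sum>i\<in>{p..<?n}. a (Suc i) - a i)" by (simp add: sum_negf[symmetric])
    also have "\<dots> = a p - a ?n" using sum_Suc_diff'[of p ?n a] p by simp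
    also have "\<dots> = \<bar>c$j\<bar>" using p unfolding a_def by simp
    finally show ?thesis unfolding s_def by auto
  qed
  have "c = (\<Sum>i\<le>?n. lam i *\<^sub>R emult (ind \<pi> i) s)" using comp by (simp add: vec_eq_iff)
  thus ?thesis using pp sY lnn lsum by blast
qed

lemma vert_vec:
  assumes "s \<in> Ycube" "y \<in> Ycube"
  shows "(\<chi> j. max 0 (1 - emult (ind \<pi> i) s $ j * y$j))
     = indv (set (take i \<pi>) \<inter> {j. s$j * y$j = -1}) + indv (- (set (take i \<pi>) - {j. s$j * y$j = -1}))"
proof -
  have "max 0 (1 - emult (ind \<pi> i) s $ j * y$j)
     = indv (set (take i \<pi>) \<inter> {j. s$j * y$j = -1}) $ j + indv (- (set (take i \<pi>) - {j. s$j * y$j = -1})) $ j" for j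
  proof -
    have "s$j = -1 \<or> s$j = 1" "y$j = -1 \<or> y$j = 1" using assms unfolding Ycube_def by auto
    thus ?thesis unfolding emult_def ind_def indv_def by auto
  qed
  thus ?thesis by (simp add: vec_eq_iff)
qed

lemma simplex_concave:
  fixes f :: "('k::finite) set \<Rightarrow> real"
  assumes sf: "submodular_fun f" and pp: "\<pi> \<in> perms" and sY: "s \<in> Ycube" and yY: "y \<in> Ycube"
    and lnn: "\<forall>i. 0 \<le> lam i" and ls: "(\<Sum>i\<le>CARD('k). lam i) = 1"
    and c: "c = (\<Sum>i\<le>CARD('k). lam i *\<^sub>R emult (ind \<pi> i) s)"
  shows "(\<Sum>i\<le>CARD('k). lam i * lovasz_hinge f (emult (ind \<pi> i) s) y) \<le> lovasz_hinge f c y"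
proof -
  let ?n = "CARD('k)"
  define N where "N = {j. s$j * y$j = -1}"
  define A where "A i = set (take i \<pi>) \<inter> N" for i
  define B where "B i = - (set (take i \<pi>) - N)" for i
  define w where "w i = emult (ind \<pi> i) s" for i
  have vv: "(\<chi> j. max 0 (1 - w i $ j * y$j)) = indv (A i) + indv (B i)" for i
    unfolding w_def A_def B_def N_def using vert_vec[OF sY yY] by simp
  obtain \<sigma> where sp: "\<sigma> \<in> perms" and pre: "\<And>i. (\<exists>l. set (take l \<sigma>) = A i) \<and> (\<exists>l. set (take l \<sigma>) = B i)"
    using sigma_exists[OF pp, of N] unfolding A_def B_def by blast
  have ds: "distinct \<sigma>" using sp unfolding perms_def by auto
  have hA: "lin f \<sigma> (indv (A i)) = f (A i)" for i using pre[of i] h_prefix[OF sf ds] by metis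
  have hB: "lin f \<sigma> (indv (B i)) = f (B i)" for i using pre[of i] h_prefix[OF sf ds] by metis
  have vup: "lovasz_hinge f (w i) y \<le> f (A i) + f (B i)" for i
    unfolding lovasz_hinge_def vv
    by (rule lovasz_le) (simp add: lin_add add_mono h_bound[OF sf])
  have cvec: "(\<chi> j. max 0 (1 - c $ j * y$j)) = (\<Sum>i\<le>?n. lam i *\<^sub>R (indv (A i) + indv (B i)))"
  proof -
    have "max 0 (1 - c $ j * y$j) = (\<Sum>i\<le>?n. lam i *\<^sub>R (indv (A i) + indv (B i)))$j" for j
    proof -
      have e: "indv (A i) $ j + indv (B i) $ j = max 0 (1 - w i $ j * y$j)" for i
      proof -
        have "(indv (A i) + indv (B i))$j = (\<chi> j. max 0 (1 - w i $ j * y$j))$j" by (simp only: vv)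
        thus ?thesis by simp
      qed
      have r: "(\<Sum>i\<le>?n. lam i *\<^sub>R (indv (A i) + indv (B i)))$j = (\<Sum>i\<le>?n. lam i * max 0 (1 - w i $ j * y$j))"
        by (simp add: e)
      have wb: "w i $ j * y$j \<le> 1" for i
      proof -
        have "s$j = -1 \<or> s$j = 1" "y$j = -1 \<or> y$j = 1" using sY yY unfolding Ycube_def by auto
        thus ?thesis unfolding w_def emult_def ind_def by auto
      qed
      have "(\<Sum>i\<le>?n. lam i * max 0 (1 - w i $ j * y$j)) = (\<Sum>i\<le>?n. lam i * (1 - w i $ j * y$j))"
        using wb by (intro sum.cong) auto
      also have "\<dots> = (\<Sum>i\<le>?n. lam i) - (\<Sum>i\<le>?n. lam i * w i $ j) * y$j"
        by (simp add: algebra_simps sum_subtractf sum_distrib_left sum_distrib_right)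
      also have "\<dots> = 1 - c$j * y$j" unfolding ls c w_def by simp
      finally have "(\<Sum>i\<le>?n. lam i * max 0 (1 - w i $ j * y$j)) = 1 - c$j * y$j" .
      moreover have "(\<Sum>i\<le>?n. lam i * max 0 (1 - w i $ j * y$j)) \<ge> 0"
        using lnn by (intro sum_nonneg) auto
      ultimately show ?thesis using r by simp
    qed
    thus ?thesis by (simp add: vec_eq_iff)
  qed
  have "(\<Sum>i\<le>?n. lam i * lovasz_hinge f (w i) y) \<le> (\<Sum>i\<le>?n. lam i * (f (A i) + f (B i)))"
    using lnn vup by (intro sum_mono mult_left_mono) auto
  also have "\<dots> = lin f \<sigma> (\<Sum>i\<le>?n. lam i *\<^sub>R (indv (A i) + indv (B i)))"
    by (simp add: lin_sum lin_add hA hB)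
  also have "\<dots> \<le> lovasz_hinge f c y"
    unfolding lovasz_hinge_def cvec by (rule lin_le_lovasz[OF sp])
  finally show ?thesis unfolding w_def .
qed

lemma vert_in_hull:
  assumes "\<forall>i. 0 \<le> lam i" "(\<Sum>i\<le>CARD('k::finite). lam i) = 1"
    and "\<And>i. i \<le> CARD('k) \<Longrightarrow> lam i > 0 \<Longrightarrow> emult (ind \<pi> i) s \<in> W"
  shows "(\<Sum>i\<le>CARD('k). lam i *\<^sub>R emult (ind \<pi> i) (s::real^'k)) \<in> convex hull W"
proof -
  define S where "S = {i. i \<le> CARD('k) \<and> lam i > 0}"
  have sub: "S \<subseteq> {..CARD('k)}" unfolding S_def by auto
  have fin: "finite S" by (rule finite_subset[OF sub finite_atMost])
  have z: "\<forall>i\<in>{..CARD('k)} - S. lam i = 0" using assms(1) unfolding S_def by (auto simp: less_le)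
  have z2: "\<forall>i\<in>{..CARD('k)} - S. lam i *\<^sub>R emult (ind \<pi> i) s = 0" using z by simp
  have e1: "(\<Sum>i\<in>S. lam i) = 1" using sum.mono_neutral_left[OF finite_atMost sub z] assms(2) by simp
  have e2: "(\<Sum>i\<in>S. lam i *\<^sub>R emult (ind \<pi> i) s) = (\<Sum>i\<le>CARD('k). lam i *\<^sub>R emult (ind \<pi> i) s)"
    by (rule sum.mono_neutral_left[OF finite_atMost sub z2])
  have mem: "emult (ind \<pi> i) s \<in> convex hull W" if "i \<in> S" for i
    using that assms(3) unfolding S_def by (intro hull_inc) simp
  have nn: "lam i \<ge> 0" if "i \<in> S" for i using assms(1) by simp
  have "(\<Sum>i\<in>S. lam i *\<^sub>R emult (ind \<pi> i) s) \<in> convex hull W"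
    by (rule convex_sum[OF fin convex_convex_hull e1 nn mem])
  thus ?thesis using e2 by simp
qed

lemma Vpy_face: "\<pi> \<in> perms \<Longrightarrow> s \<in> Ycube \<Longrightarrow> W \<subseteq> Vpy \<pi> s \<Longrightarrow> W \<in> Vface"
proof -
  assume a: "\<pi> \<in> perms" "s \<in> Ycube" "W \<subseteq> Vpy \<pi> s"
  have "Pow (Vpy \<pi> s) \<in> {Pow (Vpy \<pi> y) | \<pi> y. \<pi> \<in> perms \<and> y \<in> Ycube}" using a(1,2) by auto
  moreover have "W \<in> Pow (Vpy \<pi> s)" using a(3) by simp
  ultimately show ?thesis unfolding Vface_def by (rule UnionI)
qed

lemma Vpy_cube:
  assumes s: "s \<in> Ycube" shows "Vpy \<pi> s \<subseteq> Vcube"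
proof
  fix x assume "x \<in> Vpy \<pi> s"
  then obtain i where x: "x = emult (ind \<pi> i) s" unfolding Vpy_def by blast
  have "s$j = -1 \<or> s$j = 1" for j using s unfolding Ycube_def by auto
  thus "x \<in> Vcube" unfolding x Vcube_def emult_def ind_def by auto
qed

lemma dinf_le: "a \<in> A \<Longrightarrow> dinf A u \<le> ereal (infnorm (a - u))"
  unfolding dinf_def by (rule INF_lower)

theorem proposition2:
  fixes \<epsilon> :: real and f :: "('k::finite) set \<Rightarrow> real" and u :: "real^'k"
  assumes "\<epsilon> > 0" and "f \<in> Fk"
  shows "PsiHat \<epsilon> u \<subseteq> Psif f \<epsilon> u"
proof
  fix v assume vP: "v \<in> PsiHat \<epsilon> u"
  let ?n = "CARD('k)"
  have sf: "submodular_fun f" using assms(2) unfolding Fk_def by simp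
  have inV: "v \<in> W" if "W \<in> Vface" "dinf (convex hull W) (clip u) < ereal \<epsilon>" for W
    using vP unfolding PsiHat_def by (rule InterD) (simp add: that)
  obtain \<pi>0 s0 lam0 where p0: "\<pi>0 \<in> perms" "s0 \<in> Ycube" "\<forall>i. 0 \<le> lam0 i" "(\<Sum>i\<le>?n. lam0 i) = 1"
      "clip u = (\<Sum>i\<le>?n. lam0 i *\<^sub>R emult (ind \<pi>0 i) s0)"
    using decomp[of "clip u"] clip_abs by blast
  have cuh: "clip u \<in> convex hull (Vpy \<pi>0 s0)"
    unfolding p0(5) by (rule vert_in_hull[OF p0(3,4)]) (unfold Vpy_def, blast)
  have e1: "dinf (convex hull (Vpy \<pi>0 s0)) (clip u) \<le> ereal (infnorm (clip u - clip u))"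
    by (rule dinf_le[OF cuh])
  have e2: "ereal (infnorm (clip u - clip u)) < ereal \<epsilon>" using assms(1) by (simp add: infnorm_0)
  have "dinf (convex hull (Vpy \<pi>0 s0)) (clip u) < ereal \<epsilon>" by (rule le_less_trans[OF e1 e2])
  hence "v \<in> Vpy \<pi>0 s0" by (rule inV[OF Vpy_face[OF p0(1,2) order_refl]])
  hence vC: "v \<in> Vcube" by (rule subsetD[OF Vpy_cube[OF p0(2)]])
  have "v \<in> U" if UU: "U \<in> Uf f" and dU: "dinf U u < ereal \<epsilon>" for U
  proof -
    obtain p where pD: "p \<in> DeltaY" and Ueq: "U = argmin_set f p" using UU unfolding Uf_def by blast
    have pnn: "\<And>y. 0 \<le> p y" using pD unfolding DeltaY_def by auto
    obtain a where aU: "a \<in> U" and au: "ereal (infnorm (a - u)) < ereal \<epsilon>"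
      using dU unfolding dinf_def INF_less_iff by blast
    define c where "c = clip a"
    have "exp_hinge f c p \<le> exp_hinge f a p"
      unfolding exp_hinge_def c_def lovasz_hinge_def
      apply (intro sum_mono mult_left_mono pnn lovasz_mono[OF sf])
      subgoal for y j using clip_hinge[of y a j] by simp
      done
    hence cmin: "\<forall>u'. exp_hinge f c p \<le> exp_hinge f u' p"
      using aU unfolding Ueq argmin_set_def by (auto intro: order_trans)
    obtain \<pi> s lam where pc: "\<pi> \<in> perms" "s \<in> Ycube" "\<forall>i. 0 \<le> lam i" "(\<Sum>i\<le>?n. lam i) = 1"
        "c = (\<Sum>i\<le>?n. lam i *\<^sub>R emult (ind \<pi> i) s)"
      using decomp[of c] clip_abs unfolding c_def by blast
    define w where "w i = emult (ind \<pi> i) s" for i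
    define m where "m = exp_hinge f c p"
    have "(\<Sum>i\<le>?n. lam i * exp_hinge f (w i) p) = (\<Sum>y\<in>Ycube. p y * (\<Sum>i\<le>?n. lam i * lovasz_hinge f (w i) y))"
      unfolding exp_hinge_def by (simp add: sum_distrib_left sum.swap[of _ "{..?n}"] algebra_simps)
    also have "\<dots> \<le> m" unfolding m_def exp_hinge_def w_def
      by (intro sum_mono mult_left_mono pnn simplex_concave[OF sf pc(1,2) _ pc(3,4,5)]) (auto simp: Ycube_def)
    finally have le: "(\<Sum>i\<le>?n. lam i * exp_hinge f (w i) p) \<le> m" .
    have ge: "m \<le> exp_hinge f (w i) p" for i unfolding m_def using cmin by blast
    have "(\<Sum>i\<le>?n. lam i * (exp_hinge f (w i) p - m)) = (\<Sum>i\<le>?n. lam i * exp_hinge f (w i) p) - m"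
      using pc(4) by (simp add: algebra_simps sum_subtractf sum_distrib_left[symmetric])
    hence s0: "(\<Sum>i\<le>?n. lam i * (exp_hinge f (w i) p - m)) \<le> 0" using le by simp
    have nn: "\<forall>i\<in>{..?n}. 0 \<le> lam i * (exp_hinge f (w i) p - m)" using pc(3) ge by simp
    have z: "\<forall>i\<in>{..?n}. lam i * (exp_hinge f (w i) p - m) = 0"
    proof -
      have "0 \<le> (\<Sum>i\<le>?n. lam i * (exp_hinge f (w i) p - m))" using nn by (intro sum_nonneg) auto
      hence "(\<Sum>i\<le>?n. lam i * (exp_hinge f (w i) p - m)) = 0" using s0 by linarith
      thus ?thesis using nn by (subst (asm) sum_nonneg_eq_0_iff) auto
    qed
    define W where "W = w ` {i. i \<le> ?n \<and> lam i > 0}"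
    have WU: "W \<subseteq> U"
    proof
      fix x assume "x \<in> W"
      then obtain i where i: "i \<le> ?n" "lam i > 0" "x = w i" unfolding W_def by blast
      have "lam i * (exp_hinge f (w i) p - m) = 0" using z i(1) by simp
      hence "exp_hinge f (w i) p = m" using i(2) by simp
      thus "x \<in> U" unfolding Ueq argmin_set_def using cmin i(3) m_def by simp
    qed
    have "W \<subseteq> Vpy \<pi> s"
    proof
      fix x assume "x \<in> W"
      then obtain i where i: "i \<le> ?n" "x = w i" unfolding W_def by blast
      thus "x \<in> Vpy \<pi> s" unfolding Vpy_def w_def by blast
    qed
    hence WV: "W \<in> Vface" by (rule Vpy_face[OF pc(1,2)])
    have cW: "c \<in> convex hull W" unfolding pc(5)
      by (rule vert_in_hull[OF pc(3,4)]) (unfold W_def w_def, intro imageI, simp)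
    have d1: "dinf (convex hull W) (clip u) \<le> ereal (infnorm (c - clip u))" by (rule dinf_le[OF cW])
    have d2: "infnorm (c - clip u) \<le> infnorm (a - u)" unfolding c_def by (rule clip_lip)
    have d3: "infnorm (a - u) < \<epsilon>" using au by simp
    have d4: "ereal (infnorm (c - clip u)) < ereal \<epsilon>" using d2 d3 by simp
    have "dinf (convex hull W) (clip u) < ereal \<epsilon>" by (rule le_less_trans[OF d1 d4])
    hence "v \<in> W" by (intro inV[OF WV])
    thus ?thesis using WU by (rule subsetD[rotated])
  qed
  hence "v \<in> \<Inter>{U \<in> Uf f. dinf U u < ereal \<epsilon>}" by (intro InterI) simp
  thus "v \<in> Psif f \<epsilon> u" unfolding Psif_def using vC by (rule IntI[rotated])
qed

end
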